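(* Let $M$ be a finite abelian group of even order and exponent greater than $2$, written as $M=C_{2i_1}\times\cdots\times C_{2i_s}\times M_1$ with $|M_1|$ odd, $s\geq 1$, $i_j\geq1$. Let $H=\{x\in M: x^2=1\}$, $\mathcal{A}=\{F^+_{(f',f'',1,1)}: f'\in\mathrm{Aut}(K), f''\in\mathrm{Aut}(M)\}$ and $\mathcal{B}=\{F^+_{(I_K,I_M,x,y)}: x,y\in H\}$. Then (a) $\mathcal{B}\cong H\times H\cong C_2^{2s}$; (b) $\mathcal{B}$ is a normal subgroup of $\mathrm{Aut}(L_M)$; (c) $\mathrm{Aut}(L_M)/\mathcal{B}\cong\mathcal{A}$.
   Context: $C_n$ denotes the cyclic group of order $n$. Let $K=\{1,a,b,c\}$ be the Klein four-group. Set $L_M=K\times M$ with the operation $(A,x)*(B,y)=(AB,xy)$ if $B=1$, and $(A,x)*(B,y)=(AB,x^{-1}y)$ if $B\neq 1$. For $u,v\in M$ with $u^2=v^2=1$, $\alpha_{(u,v)}:K\to M$ is defined by $\alpha_{(u,v)}(1)=1$, $\alpha_{(u,v)}(a)=u$, $\alpha_{(u,v)}(b)=v$, $\alpha_{(u,v)}(c)=uv$. For $f'\in\mathrm{Aut}(K)$, $f''\in\mathrm{Aut}(M)$ define $F^+_{(f',f'',u,v)}(A,x)=(f'(A),f''(x)\alpha_{(u,v)}(A))$. $I_K$, $I_M$ are the identity maps of $K$, $M$. $\mathcal{A}$ and $\mathcal{B}$ are subgroups of $\mathrm{Aut}(L_M)$ under composition. *)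

theory Defs
  imports "HOL-Algebra.Algebra"
begin

datatype klein = K1 | Ka | Kb | Kc

fun klein_mult :: "klein \<Rightarrow> klein \<Rightarrow> klein" where
  "klein_mult K1 y = y"
| "klein_mult x K1 = x"
| "klein_mult Ka Ka = K1" | "klein_mult Kb Kb = K1" | "klein_mult Kc Kc = K1"
| "klein_mult Ka Kb = Kc" | "klein_mult Kb Ka = Kc"
| "klein_mult Ka Kc = Kb" | "klein_mult Kc Ka = Kb"
| "klein_mult Kb Kc = Ka" | "klein_mult Kc Kb = Ka"

definition Klein :: "klein monoid" where
  "Klein = \<lparr>carrier = UNIV, Group.monoid.mult = klein_mult, Group.monoid.one = K1\<rparr>"

definition L_grp :: "('a, 'b) monoid_scheme \<Rightarrow> (klein \<times> 'a) monoid" where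
  "L_grp M = \<lparr>carrier = carrier Klein \<times> carrier M,
     Group.monoid.mult = (\<lambda>(A, x) (B, y). (A \<otimes>\<^bsub>Klein\<^esub> B,
               (if B = K1 then x \<otimes>\<^bsub>M\<^esub> y else inv\<^bsub>M\<^esub> x \<otimes>\<^bsub>M\<^esub> y))),
     Group.monoid.one = (K1, \<one>\<^bsub>M\<^esub>)\<rparr>"

fun alpha :: "('a, 'b) monoid_scheme \<Rightarrow> 'a \<Rightarrow> 'a \<Rightarrow> klein \<Rightarrow> 'a" where
  "alpha M u v K1 = \<one>\<^bsub>M\<^esub>"
| "alpha M u v Ka = u"
| "alpha M u v Kb = v"
| "alpha M u v Kc = u \<otimes>\<^bsub>M\<^esub> v"

text \<open>F^+_(f',f'',u,v)(A,x) = (f'(A), f''(x) alpha_(u,v)(A)), as an (extensional)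
  map on the carrier of L_M, so that it can be an element of AutoGroup (L_grp M).\<close>
definition Fplus :: "('a, 'b) monoid_scheme \<Rightarrow> (klein \<Rightarrow> klein) \<Rightarrow> ('a \<Rightarrow> 'a) \<Rightarrow> 'a \<Rightarrow> 'a
    \<Rightarrow> (klein \<times> 'a \<Rightarrow> klein \<times> 'a)" where
  "Fplus M f' f'' u v = (\<lambda>p \<in> carrier (L_grp M).
      (f' (fst p), f'' (snd p) \<otimes>\<^bsub>M\<^esub> alpha M u v (fst p)))"

definition exponent :: "('a, 'b) monoid_scheme \<Rightarrow> nat" where
  "exponent M = Lcm (group.ord M ` carrier M)"

end

theory Submission
  imports Defs
begin


lemma klein_UNIV: "(UNIV::klein set) = {K1,Ka,Kb,Kc}"
  by (auto intro: klein.exhaust)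

instance klein :: finite
  by standard (simp add: klein_UNIV)

lemma klein_sq[simp]: "klein_mult A A = K1" by (cases A) auto
lemma klein_one_r[simp]: "klein_mult A K1 = A" by (cases A) auto
lemma klein_eq_K1_iff: "klein_mult A B = K1 \<longleftrightarrow> A = B" by (cases A; cases B) auto
lemma Klein_carrier[simp]: "carrier Klein = UNIV" by (simp add: Klein_def)
lemma Klein_mult[simp]: "x \<otimes>\<^bsub>Klein\<^esub> y = klein_mult x y" by (simp add: Klein_def)
lemma Klein_one[simp]: "\<one>\<^bsub>Klein\<^esub> = K1" by (simp add: Klein_def)

lemma klein_auto_K1:
  assumes "f \<in> auto Klein" shows "f K1 = K1" "f B = K1 \<longleftrightarrow> B = K1"
proof -
  have h: "f (klein_mult x y) = klein_mult (f x) (f y)" for x y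
    using assms by (auto simp: auto_def hom_def)
  have i: "inj f" using assms by (auto simp: auto_def Bij_def bij_betw_def)
  show 1: "f K1 = K1" using h[of K1 K1] klein_eq_K1_iff by (metis klein.distinct(1,3,5) klein_mult.simps(1)) 
  show "f B = K1 \<longleftrightarrow> B = K1" using 1 i by (metis injD)
qed

lemma hom_cl: "h \<in> hom G H \<Longrightarrow> x \<in> carrier G \<Longrightarrow> h x \<in> carrier H"
  by (auto simp: hom_def)
lemma hom_m: "h \<in> hom G H \<Longrightarrow> x \<in> carrier G \<Longrightarrow> y \<in> carrier G \<Longrightarrow> h (x \<otimes>\<^bsub>G\<^esub> y) = h x \<otimes>\<^bsub>H\<^esub> h y"
  by (auto simp: hom_def)

definition psi :: "('a, 'b) monoid_scheme \<Rightarrow> (klein \<times> 'a \<Rightarrow> klein \<times> 'a) \<Rightarrow> (klein \<times> 'a \<Rightarrow> klein \<times> 'a)" where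
  "psi G \<phi> = (\<lambda>p\<in>carrier (L_grp G). (fst (\<phi> (fst p, \<one>\<^bsub>G\<^esub>)), snd (\<phi> (K1, snd p))))"

context comm_group begin

abbreviation "LL \<equiv> L_grp G"

lemma L_carrier[simp]: "carrier LL = UNIV \<times> carrier G"
  by (simp add: L_grp_def)
lemma L_mult[simp]: "(A,x) \<otimes>\<^bsub>LL\<^esub> (B,y) = (klein_mult A B, if B = K1 then x \<otimes> y else inv x \<otimes> y)"
  by (simp add: L_grp_def)
lemma L_one[simp]: "\<one>\<^bsub>LL\<^esub> = (K1, \<one>)"
  by (simp add: L_grp_def)

lemma L_mult_funcset: "monoid.mult LL \<in> carrier LL \<rightarrow> carrier LL \<rightarrow> carrier LL"
proof -
  have "p \<otimes>\<^bsub>LL\<^esub> q \<in> carrier LL" if "p \<in> carrier LL" "q \<in> carrier LL" for p q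
    using that by (cases p; cases q) auto
  then show ?thesis by blast
qed

lemma subgroup_auto_L: "subgroup (auto LL) (BijGroup (carrier LL))"
proof (rule subgroup.intro)
  show "auto LL \<subseteq> carrier (BijGroup (carrier LL))"
    by (force simp add: auto_def BijGroup_def)
next
  fix x y
  assume "x \<in> auto LL" "y \<in> auto LL" 
  then have xb: "x \<in> Bij (carrier LL)" "y \<in> Bij (carrier LL)" and xh: "x \<in> hom LL LL" "y \<in> hom LL LL"
    by (auto simp: auto_def)
  have "compose (carrier LL) x y \<in> hom LL LL"
  proof (rule homI)
    fix p assume "p \<in> carrier LL" then show "compose (carrier LL) x y p \<in> carrier LL"
      using xh hom_cl[of y LL LL p] hom_cl[of x LL LL "y p"] by (simp add: compose_def)
  next
    fix p q assume pq: "p \<in> carrier LL" "q \<in> carrier LL"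
    have "p \<otimes>\<^bsub>LL\<^esub> q \<in> carrier LL" using pq L_mult_funcset by blast
    then show "compose (carrier LL) x y (p \<otimes>\<^bsub>LL\<^esub> q) = compose (carrier LL) x y p \<otimes>\<^bsub>LL\<^esub> compose (carrier LL) x y q"
    proof -
      have yc: "y p \<in> carrier LL" "y q \<in> carrier LL" using pq xh(2) by (auto intro: hom_cl simp del: L_carrier)
      show ?thesis using pq \<open>p \<otimes>\<^bsub>LL\<^esub> q \<in> carrier LL\<close> hom_m[OF xh(2) pq] hom_m[OF xh(1) yc]
        by (simp add: compose_def del: L_carrier)
    qed
  qed
  then show "x \<otimes>\<^bsub>BijGroup (carrier LL)\<^esub> y \<in> auto LL"
    using xb by (simp add: BijGroup_def auto_def compose_Bij)
next
  show "\<one>\<^bsub>BijGroup (carrier LL)\<^esub> \<in> auto LL"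
    by (simp add: BijGroup_def auto_def hom_def id_Bij L_mult_funcset[unfolded Pi_def, simplified])
next
  fix x 
  assume x: "x \<in> auto LL" 
  have "restrict (inv_into (carrier LL) x) (carrier LL) \<in> hom LL LL"
  proof (rule homI)
    have xb: "x \<in> Bij (carrier LL)" and xh: "x \<in> hom LL LL" using x by (auto simp: auto_def)
    fix p assume p: "p \<in> carrier LL"
    then show "restrict (inv_into (carrier LL) x) (carrier LL) p \<in> carrier LL"
      using Bij_inv_into_mem[OF xb p] p by (simp del: L_carrier)
    fix q assume q: "q \<in> carrier LL"
    have pq: "p \<otimes>\<^bsub>LL\<^esub> q \<in> carrier LL" using p q L_mult_funcset by blast
    have "inv_into (carrier LL) x (p \<otimes>\<^bsub>LL\<^esub> q) = inv_into (carrier LL) x p \<otimes>\<^bsub>LL\<^esub> inv_into (carrier LL) x q"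
      by (rule Bij_inv_into_lemma[OF _ xb L_mult_funcset p q]) (rule hom_m[OF xh])
    then show "restrict (inv_into (carrier LL) x) (carrier LL) (p \<otimes>\<^bsub>LL\<^esub> q) =
       restrict (inv_into (carrier LL) x) (carrier LL) p \<otimes>\<^bsub>LL\<^esub> restrict (inv_into (carrier LL) x) (carrier LL) q"
      using p q pq by (simp del: L_carrier)
  qed
  thus "inv\<^bsub>BijGroup (carrier LL)\<^esub> x \<in> auto LL"
    using x by (simp del: restrict_apply
        add: inv_BijGroup auto_def restrict_inv_into_Bij)
qed

lemma group_Aut: "group (AutoGroup LL)"
  unfolding AutoGroup_def by (rule subgroup.subgroup_is_group[OF subgroup_auto_L group_BijGroup])

lemma Aut_carrier[simp]: "carrier (AutoGroup LL) = auto LL"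
  by (simp add: AutoGroup_def)
lemma Aut_mult: "g \<in> auto LL \<Longrightarrow> f \<in> auto LL \<Longrightarrow> g \<otimes>\<^bsub>AutoGroup LL\<^esub> f = compose (carrier LL) g f"
  by (simp add: AutoGroup_def BijGroup_def auto_def)
lemma Aut_one[simp]: "\<one>\<^bsub>AutoGroup LL\<^esub> = (\<lambda>x\<in>carrier LL. x)"
  by (simp add: AutoGroup_def BijGroup_def)


definition "Hs \<equiv> {x \<in> carrier G. x \<otimes> x = \<one>}"

lemma sq_cancel: "x \<in> carrier G \<Longrightarrow> y \<in> carrier G \<Longrightarrow> x \<otimes> x = \<one> \<Longrightarrow> x \<otimes> (x \<otimes> y) = y"
  by (simp add: m_assoc[symmetric])

lemma alpha_carrier[simp]: "u \<in> carrier G \<Longrightarrow> v \<in> carrier G \<Longrightarrow> alpha G u v A \<in> carrier G"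
  by (cases A) auto

lemma alpha_one[simp]: "alpha G \<one> \<one> A = \<one>"
  by (cases A) auto

lemma alpha_sq:
  assumes "u \<in> Hs" "v \<in> Hs" shows "alpha G u v A \<otimes> alpha G u v A = \<one>"
  using assms unfolding Hs_def by (cases A) (simp_all add: m_assoc[symmetric] sq_cancel, metis m_assoc m_comm sq_cancel)

lemma alpha_inv:
  assumes "u \<in> Hs" "v \<in> Hs" shows "inv (alpha G u v A) = alpha G u v A"
proof -
  have "u \<in> carrier G" "v \<in> carrier G" using assms by (auto simp: Hs_def)
  then show ?thesis using alpha_sq[OF assms] by (intro inv_equality) auto
qed

lemma alpha_mult:
  assumes "u \<in> Hs" "v \<in> Hs"
  shows "alpha G u v (klein_mult A B) = alpha G u v A \<otimes> alpha G u v B"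
  using assms unfolding Hs_def
  by (cases A; cases B) (simp_all add: m_assoc sq_cancel m_lcomm[of v u] m_comm[of v u])

lemma Fplus_apply[simp]: "x \<in> carrier G \<Longrightarrow> Fplus G f' f'' u v (A,x) = (f' A, f'' x \<otimes> alpha G u v A)"
  by (simp add: Fplus_def)

lemma Fplus_cong: "(\<And>x. x \<in> carrier G \<Longrightarrow> f'' x = g'' x) \<Longrightarrow> Fplus G f' f'' u v = Fplus G f' g'' u v"
  unfolding Fplus_def by (rule restrict_ext) auto

lemma Fplus_auto:
  assumes f': "f' \<in> auto Klein" and f'': "f'' \<in> auto G" and uv: "u \<in> Hs" "v \<in> Hs"
    and fin: "finite (carrier G)"
  shows "Fplus G f' f'' u v \<in> auto LL"
proof -
  have gh: "group_hom G G f''" using f'' unfolding auto_def group_hom_def group_hom_axioms_def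
    by (simp add: is_group)
  have f''c: "f'' x \<in> carrier G" if "x \<in> carrier G" for x
    using group_hom.hom_closed[OF gh that] .
  have f''inj: "inj_on f'' (carrier G)" using f'' by (auto simp: auto_def Bij_def bij_betw_def)
  have f'h: "f' (klein_mult A B) = klein_mult (f' A) (f' B)" for A B
    using f' by (auto simp: auto_def hom_def)
  have f'inj: "inj f'" using f' by (auto simp: auto_def Bij_def bij_betw_def)
  have uvc: "u \<in> carrier G" "v \<in> carrier G" using uv by (auto simp: Hs_def)
  let ?F = "Fplus G f' f'' u v"
  have hom: "?F \<in> hom LL LL"
  proof (rule homI)
    fix p assume p: "p \<in> carrier LL"
    obtain A x where pe: "p = (A,x)" by (cases p)
    have x: "x \<in> carrier G" using p pe by simp
    show "?F p \<in> carrier LL" using x pe f''c[OF x] uvc by simp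
  next
    fix p q assume p: "p \<in> carrier LL" and q: "q \<in> carrier LL"
    obtain A x where pe: "p = (A,x)" by (cases p)
    obtain B y where qe: "q = (B,y)" by (cases q)
    have x: "x \<in> carrier G" and y: "y \<in> carrier G" using p q pe qe by auto
    show "?F (p \<otimes>\<^bsub>LL\<^esub> q) = ?F p \<otimes>\<^bsub>LL\<^esub> ?F q"
    proof (cases "B = K1")
      case True
      have e1: "f'' (x \<otimes> y) \<otimes> alpha G u v A = f'' x \<otimes> alpha G u v A \<otimes> (f'' y \<otimes> \<one>)"
        using x y f''c uvc group_hom.hom_mult[OF gh x y] by (simp add: m_ac)
      show ?thesis using True x y pe qe e1 klein_auto_K1(1)[OF f'] by simp
    next
      case False
      then have "f' B \<noteq> K1" using klein_auto_K1[OF f'] by simp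
      have c: "f'' x \<in> carrier G" "f'' y \<in> carrier G" "alpha G u v A \<in> carrier G" "alpha G u v B \<in> carrier G"
        using f''c x y uvc by auto
      have e2: "f'' (inv x \<otimes> y) \<otimes> alpha G u v (klein_mult A B) =
         inv (f'' x \<otimes> alpha G u v A) \<otimes> (f'' y \<otimes> alpha G u v B)"
        using c x y group_hom.hom_mult[OF gh _ y, of "inv x"] group_hom.hom_inv[OF gh x]
        by (simp add: alpha_mult[OF uv] inv_mult alpha_inv[OF uv] m_ac)
      then show ?thesis using False \<open>f' B \<noteq> K1\<close> x y pe qe by (simp add: f'h)
    qed
  qed
  have inj: "inj_on ?F (carrier LL)"
  proof (rule inj_onI)
    fix p q assume p: "p \<in> carrier LL" and q: "q \<in> carrier LL" and e: "?F p = ?F q"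
    obtain A x where pe: "p = (A,x)" by (cases p)
    obtain B y where qe: "q = (B,y)" by (cases q)
    have x: "x \<in> carrier G" and y: "y \<in> carrier G" using p q pe qe by auto
    from e have "f' A = f' B" using x y pe qe by simp
    then have AB: "A = B" using f'inj by (simp add: inj_eq)
    from e have "f'' x \<otimes> alpha G u v A = f'' y \<otimes> alpha G u v A" using x y pe qe AB by simp
    then have "f'' x = f'' y" using r_cancel[of "alpha G u v A" "f'' x" "f'' y"] x y f''c uvc by simp
    then have "x = y" using f''inj x y by (simp add: inj_on_eq_iff)
    then show "p = q" using pe qe AB by simp
  qed
  have sub: "?F ` carrier LL \<subseteq> carrier LL" using hom_cl[OF hom] by (auto simp del: L_carrier)
  have fin2: "finite (carrier LL)" using fin by simp
  have "?F ` carrier LL = carrier LL" using endo_inj_surj[OF fin2 sub inj] .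
  then have "bij_betw ?F (carrier LL) (carrier LL)" using inj by (simp add: bij_betw_def)
  moreover have "?F \<in> extensional (carrier LL)" by (simp add: Fplus_def)
  ultimately show ?thesis using hom unfolding auto_def Bij_def by blast
qed


lemma sq_of_inv_sq:
  assumes u: "u \<in> carrier G" and e: "inv u \<otimes> inv u = \<one>" shows "u \<otimes> u = \<one>"
proof -
  have "inv (inv u) = inv u" using e u by (intro inv_equality) auto
  then have "inv u = u" using u by simp
  then show ?thesis using u l_inv[OF u] by simp
qed

lemma auto_L_char:
  assumes fin: "finite (carrier G)" and m0: "m0 \<in> carrier G" "m0 \<otimes> m0 \<noteq> \<one>"
    and phi: "\<phi> \<in> auto LL"
  shows "(\<lambda>A. fst (\<phi> (A, \<one>))) \<in> auto Klein"
    and "(\<lambda>x\<in>carrier G. snd (\<phi> (K1, x))) \<in> auto G"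
    and "snd (\<phi> (Ka, \<one>)) \<in> Hs" "snd (\<phi> (Kb, \<one>)) \<in> Hs"
    and "\<phi> = Fplus G (\<lambda>A. fst (\<phi> (A, \<one>))) (\<lambda>x\<in>carrier G. snd (\<phi> (K1, x)))
                (snd (\<phi> (Ka, \<one>))) (snd (\<phi> (Kb, \<one>)))"
proof -
  have ph: "\<phi> \<in> hom LL LL" and pb: "\<phi> \<in> Bij (carrier LL)" using phi by (auto simp: auto_def)
  have pm: "\<phi> ((A,x) \<otimes>\<^bsub>LL\<^esub> (B,y)) = \<phi> (A,x) \<otimes>\<^bsub>LL\<^esub> \<phi> (B,y)"
    if "x \<in> carrier G" "y \<in> carrier G" for A B x y
    using hom_m[OF ph, of "(A,x)" "(B,y)"] that by simp
  have pc: "snd (\<phi> (A,x)) \<in> carrier G" if "x \<in> carrier G" for A x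
    using hom_cl[OF ph, of "(A,x)"] that by (simp add: mem_Times_iff)
  have pinj: "inj_on \<phi> (carrier LL)" and psurj: "\<phi> ` carrier LL = carrier LL"
    using pb by (auto simp: Bij_def bij_betw_def simp del: L_carrier)
  have pinj': "\<phi> (A,x) = \<phi> (B,y) \<Longrightarrow> x \<in> carrier G \<Longrightarrow> y \<in> carrier G \<Longrightarrow> (A,x) = (B,y)" for A B x y
    using pinj unfolding inj_on_def by simp
  have pext: "\<phi> \<in> extensional (carrier LL)" using pb by (simp add: Bij_def del: L_carrier)
  define f' where "f' = (\<lambda>A. fst (\<phi> (A, \<one>)))"
  define \<beta> where "\<beta> = (\<lambda>A. snd (\<phi> (A, \<one>)))"
  define g where "g = (\<lambda>x. snd (\<phi> (K1, x)))"
  have \<beta>c: "\<beta> A \<in> carrier G" for A unfolding \<beta>_def by (rule pc) simp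
  have gc: "g x \<in> carrier G" if "x \<in> carrier G" for x unfolding g_def using pc that .
  have S1: "\<phi> (K1, \<one>) = (K1, \<one>)"
  proof -
    obtain P w where e: "\<phi> (K1, \<one>) = (P, w)" by (cases "\<phi> (K1, \<one>)")
    have w: "w \<in> carrier G" using pc[of \<one> K1] e by simp
    have "\<phi> (K1, \<one>) = \<phi> (K1, \<one>) \<otimes>\<^bsub>LL\<^esub> \<phi> (K1, \<one>)" using pm[of \<one> \<one> K1 K1] by simp
    then have "(P,w) = (P,w) \<otimes>\<^bsub>LL\<^esub> (P,w)" by (simp only: e)
    then have "(P, w) = (K1, if P = K1 then w \<otimes> w else inv w \<otimes> w)" using L_mult[of P w P w] klein_sq[of P] by argo
    then have "P = K1 \<and> w = (if P = K1 then w \<otimes> w else inv w \<otimes> w)" by (rule iffD1[OF prod.inject])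
    then have P: "P = K1" and w': "w = (if P = K1 then w \<otimes> w else inv w \<otimes> w)" by blast+
    have "(if P = K1 then w \<otimes> w else inv w \<otimes> w) = w \<otimes> w" using P by simp
    with w' have "w = w \<otimes> w" by (rule trans)
    then have "w \<otimes> \<one> = w \<otimes> w" using w by simp
    then have "w = \<one>" using w by (simp del: r_one)
    then show ?thesis using e P by simp
  qed
  obtain w where qw: "\<phi> (K1, m0) = (K1, w)" and w: "w \<in> carrier G" and wsq: "w \<otimes> w \<noteq> \<one>"
  proof -
    obtain P w where e: "\<phi> (K1, m0) = (P, w)" by (cases "\<phi> (K1, m0)")
    have w: "w \<in> carrier G" using pc[OF m0(1), of K1] e by simp
    have ne: "\<phi> (K1, m0 \<otimes> m0) \<noteq> \<phi> (K1, \<one>)"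
      using pinj'[of K1 "m0 \<otimes> m0" K1 \<one>] m0 by auto
    have "\<phi> (K1, m0 \<otimes> m0) = \<phi> (K1, m0) \<otimes>\<^bsub>LL\<^esub> \<phi> (K1, m0)" using pm[OF m0(1) m0(1), of K1 K1] by simp
    then have eq: "\<phi> (K1, m0 \<otimes> m0) = (K1, if P = K1 then w \<otimes> w else inv w \<otimes> w)" using e by simp
    have P: "P = K1"
    proof (rule ccontr)
      assume "P \<noteq> K1" then have "\<phi> (K1, m0 \<otimes> m0) = (K1, \<one>)" using eq w by simp
      then show False using ne S1 by simp
    qed
    have "w \<otimes> w \<noteq> \<one>" using eq ne S1 P by auto
    then show ?thesis using that e P w by simp
  qed
  have S3: "fst (\<phi> (K1, x)) = K1" if x: "x \<in> carrier G" for x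
  proof (rule ccontr)
    assume nB: "fst (\<phi> (K1, x)) \<noteq> K1"
    obtain B y where e: "\<phi> (K1, x) = (B, y)" by (cases "\<phi> (K1, x)")
    have y: "y \<in> carrier G" using pc[OF x, of K1] e by simp
    have "\<phi> (K1, m0 \<otimes> x) = \<phi> (K1, x \<otimes> m0)" using m0 x by (simp add: m_comm)
    then have "\<phi> (K1, m0) \<otimes>\<^bsub>LL\<^esub> \<phi> (K1, x) = \<phi> (K1, x) \<otimes>\<^bsub>LL\<^esub> \<phi> (K1, m0)"
      using pm[OF m0(1) x, of K1 K1] pm[OF x m0(1), of K1 K1] by simp
    then have "inv w \<otimes> y = y \<otimes> w" using qw e nB by simp
    then have "inv w \<otimes> y = w \<otimes> y" using y w by (simp add: m_comm)
    then have "inv w = w" using y w by simp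
    then have "w \<otimes> w = \<one>" using l_inv[OF w] by simp
    then show False using wsq by simp
  qed
  have S3': "\<phi> (K1, x) = (K1, g x)" if "x \<in> carrier G" for x
    using S3[OF that] unfolding g_def by (metis prod.collapse)
  have S4: "\<phi> (A, x) = (f' A, \<beta> A \<otimes> g x)" if x: "x \<in> carrier G" for A x
  proof -
    have "\<phi> (A, x) = \<phi> ((A, \<one>) \<otimes>\<^bsub>LL\<^esub> (K1, x))" using x by simp
    also have "\<dots> = \<phi> (A, \<one>) \<otimes>\<^bsub>LL\<^esub> \<phi> (K1, x)" using pm[of \<one> x A K1] x by simp
    also have "\<dots> = (f' A, \<beta> A) \<otimes>\<^bsub>LL\<^esub> (K1, g x)" using S3'[OF x] unfolding f'_def \<beta>_def by simp
    finally show ?thesis by simp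
  qed
  have gm: "g (x \<otimes> y) = g x \<otimes> g y" if "x \<in> carrier G" "y \<in> carrier G" for x y
  proof -
    have "\<phi> (K1, x \<otimes> y) = \<phi> (K1, x) \<otimes>\<^bsub>LL\<^esub> \<phi> (K1, y)" using pm[of x y K1 K1] that by simp
    then show ?thesis using S3'[OF that(1)] S3'[OF that(2)] S3'[of "x \<otimes> y"] that by simp
  qed
  have ginj: "inj_on g (carrier G)"
  proof (rule inj_onI)
    fix x y assume "x \<in> carrier G" "y \<in> carrier G" "g x = g y"
    then show "x = y" using S3' pinj'[of K1 x K1 y] by simp
  qed
  define g' where "g' = (\<lambda>x\<in>carrier G. g x)"
  have g'_eq: "(\<lambda>x\<in>carrier G. snd (\<phi> (K1, x))) = g'" unfolding g'_def g_def by simp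
  have g'auto: "g' \<in> auto G"
  proof -
    have "g' \<in> hom G G" unfolding g'_def by (rule homI) (auto simp: gc gm)
    moreover have "inj_on g' (carrier G)" using ginj unfolding g'_def inj_on_def by simp
    moreover have "g' ` carrier G \<subseteq> carrier G" using gc unfolding g'_def by auto
    ultimately show ?thesis using endo_inj_surj[OF fin] unfolding auto_def Bij_def bij_betw_def g'_def by auto
  qed
  then show "(\<lambda>x\<in>carrier G. snd (\<phi> (K1, x))) \<in> auto G" using g'_eq by simp
  have f'm: "f' (klein_mult A B) = klein_mult (f' A) (f' B)" for A B
  proof -
    have "\<phi> (klein_mult A B, \<one>) = \<phi> (A, \<one>) \<otimes>\<^bsub>LL\<^esub> \<phi> (B, \<one>)" using pm[of \<one> \<one> A B] by (cases "B = K1") simp_all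
    then show ?thesis unfolding f'_def by (cases "\<phi> (A, \<one>)"; cases "\<phi> (B, \<one>)") simp
  qed
  have "surj f'" unfolding surj_def
  proof
    fix B
    have "(B, \<one>) \<in> carrier LL" by simp
    then have "(B, \<one>) \<in> \<phi> ` carrier LL" by (rule ssubst[OF psurj])
    then obtain p where p: "p \<in> carrier LL" "\<phi> p = (B, \<one>)" by (metis imageE)
    obtain A x where pe: "p = (A, x)" by (cases p)
    have x: "x \<in> carrier G" using p pe by simp
    have "f' A = B" using S4[OF x] p(2) pe by simp
    then show "\<exists>A. B = f' A" by blast
  qed
  then have f'bij: "bij f'" using finite_UNIV_surj_inj[OF finite_UNIV] by (simp add: bij_def)
  have f'auto: "f' \<in> auto Klein"
    using f'bij f'm unfolding auto_def Bij_def hom_def by (simp add: bij_def bij_betw_def)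
  then show "(\<lambda>A. fst (\<phi> (A, \<one>))) \<in> auto Klein" unfolding f'_def .
  have \<beta>1: "\<beta> K1 = \<one>" using S1 unfolding \<beta>_def by simp
  have \<beta>m: "\<beta> (klein_mult A B) = inv (\<beta> A) \<otimes> \<beta> B" if B: "B \<noteq> K1" for A B
  proof -
    have fB: "f' B \<noteq> K1" using klein_auto_K1(2)[OF f'auto] B by simp
    have "\<phi> (klein_mult A B, \<one>) = \<phi> (A, \<one>) \<otimes>\<^bsub>LL\<^esub> \<phi> (B, \<one>)" using pm[of \<one> \<one> A B] B by (cases "B = K1") simp_all
    also have "\<dots> = (f' A, \<beta> A) \<otimes>\<^bsub>LL\<^esub> (f' B, \<beta> B)" unfolding f'_def \<beta>_def by simp
    finally show ?thesis using fB unfolding \<beta>_def by simp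
  qed
  define u where "u = \<beta> Ka"
  define v where "v = \<beta> Kb"
  have uc: "u \<in> carrier G" and vc: "v \<in> carrier G" unfolding u_def v_def by (auto simp: \<beta>c)
  have c1: "\<beta> Kc = inv u \<otimes> v" using \<beta>m[of Kb Ka] unfolding u_def v_def by simp
  have c2: "\<beta> Kb = inv u \<otimes> \<beta> Kc" using \<beta>m[of Kc Ka] unfolding u_def by simp
  have c3: "\<beta> Kc = inv v \<otimes> u" using \<beta>m[of Ka Kb] unfolding u_def v_def by simp
  have c4: "\<beta> Ka = inv v \<otimes> \<beta> Kc" using \<beta>m[of Kc Kb] unfolding v_def by simp
  have "v = (inv u \<otimes> inv u) \<otimes> v" using c1 c2 uc vc unfolding v_def[symmetric] by (simp add: m_assoc)
  then have "inv u \<otimes> inv u = \<one>" using uc vc by (metis inv_closed m_closed r_cancel_one')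
  then have usq: "u \<otimes> u = \<one>" using sq_of_inv_sq uc by blast
  have "u = (inv v \<otimes> inv v) \<otimes> u" using c3 c4 uc vc unfolding u_def[symmetric] by (simp add: m_assoc)
  then have "inv v \<otimes> inv v = \<one>" using uc vc by (metis inv_closed m_closed r_cancel_one')
  then have vsq: "v \<otimes> v = \<one>" using sq_of_inv_sq vc by blast
  have uH: "u \<in> Hs" and vH: "v \<in> Hs" using uc vc usq vsq by (auto simp: Hs_def)
  then show "snd (\<phi> (Ka, \<one>)) \<in> Hs" "snd (\<phi> (Kb, \<one>)) \<in> Hs" unfolding u_def v_def \<beta>_def by auto
  have invu: "inv u = u" using usq uc by (intro inv_equality) auto
  have \<beta>\<alpha>: "\<beta> A = alpha G u v A" for A
    by (cases A) (simp_all add: \<beta>1 u_def v_def c1 invu[unfolded u_def])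
  show "\<phi> = Fplus G (\<lambda>A. fst (\<phi> (A, \<one>))) (\<lambda>x\<in>carrier G. snd (\<phi> (K1, x)))
                (snd (\<phi> (Ka, \<one>))) (snd (\<phi> (Kb, \<one>)))"
  proof (rule ext)
    fix p
    show "\<phi> p = Fplus G (\<lambda>A. fst (\<phi> (A, \<one>))) (\<lambda>x\<in>carrier G. snd (\<phi> (K1, x)))
                (snd (\<phi> (Ka, \<one>))) (snd (\<phi> (Kb, \<one>))) p"
    proof (cases "p \<in> carrier LL")
      case True
      obtain A x where pe: "p = (A, x)" by (cases p)
      have x: "x \<in> carrier G" using True pe by simp
      have uu: "snd (\<phi> (Ka, \<one>)) = u" and vv: "snd (\<phi> (Kb, \<one>)) = v" by (simp_all add: u_def v_def \<beta>_def)
      show ?thesis using S4[OF x] pe x \<beta>\<alpha>[of A] \<beta>c[of A] gc[OF x]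
        unfolding f'_def[symmetric] g_def[symmetric] uu vv
        by (simp add: m_comm)
    next
      case False
      have "\<phi> p = undefined" using pext False by (rule extensional_arb)
      then show ?thesis using False unfolding Fplus_def by (simp del: L_carrier)
    qed
  qed
qed


lemma id_auto_Klein: "id \<in> auto Klein"
  by (simp add: auto_def hom_def Bij_def)

lemma one_Hs: "\<one> \<in> Hs" by (simp add: Hs_def)

lemma auto_G_facts:
  assumes "f \<in> auto G" shows "x \<in> carrier G \<Longrightarrow> f x \<in> carrier G"
  using assms by (auto simp: auto_def hom_def)

lemma psi_Fplus:
  assumes f'': "f'' \<in> auto G"
  shows "psi G (Fplus G f' f'' u v) = Fplus G f' f'' \<one> \<one>"
proof (rule ext)
  fix p show "psi G (Fplus G f' f'' u v) p = Fplus G f' f'' \<one> \<one> p"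
  proof (cases "p \<in> carrier LL")
    case True
    obtain A x where pe: "p = (A, x)" by (cases p)
    have x: "x \<in> carrier G" using True pe by simp
    show ?thesis using pe x auto_G_facts[OF f'' x] unfolding psi_def by simp
  next
    case False then show ?thesis unfolding psi_def Fplus_def by (simp del: L_carrier)
  qed
qed

lemma psi_compose:
  assumes f1: "f1 \<in> auto Klein" and g1: "g1 \<in> auto Klein" and f2: "f2 \<in> auto G" and g2: "g2 \<in> auto G"
    and uv: "uf \<in> Hs" "vf \<in> Hs" "ug \<in> Hs" "vg \<in> Hs"
  shows "psi G (compose (carrier LL) (Fplus G g1 g2 ug vg) (Fplus G f1 f2 uf vf))
       = compose (carrier LL) (Fplus G g1 g2 \<one> \<one>) (Fplus G f1 f2 \<one> \<one>)"
proof (rule ext)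
  have uvc: "uf \<in> carrier G" "vf \<in> carrier G" "ug \<in> carrier G" "vg \<in> carrier G" using uv by (auto simp: Hs_def)
  fix p show "psi G (compose (carrier LL) (Fplus G g1 g2 ug vg) (Fplus G f1 f2 uf vf)) p
       = compose (carrier LL) (Fplus G g1 g2 \<one> \<one>) (Fplus G f1 f2 \<one> \<one>) p"
  proof (cases "p \<in> carrier LL")
    case True
    obtain A x where pe: "p = (A, x)" by (cases p)
    have x: "x \<in> carrier G" using True pe by simp
    have c1: "f2 \<one> \<in> carrier G" "f2 x \<in> carrier G" using auto_G_facts[OF f2] x by auto
    have c2: "g2 (f2 x) \<in> carrier G" "g2 (f2 \<one> \<otimes> alpha G uf vf A) \<in> carrier G"
      using auto_G_facts[OF g2] c1 uvc by auto
    show ?thesis using pe x c1 c2 uvc klein_auto_K1(1)[OF f1] unfolding psi_def compose_def by simp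
  next
    case False then show ?thesis unfolding psi_def compose_def by (simp del: L_carrier)
  qed
qed

lemma main_bc:
  assumes fin: "finite (carrier G)" and m0: "m0 \<in> carrier G" "m0 \<otimes> m0 \<noteq> \<one>"
  defines "Ac \<equiv> {Fplus G f' f'' \<one> \<one> | f' f''. f' \<in> auto Klein \<and> f'' \<in> auto G}"
    and "Bc \<equiv> {Fplus G id id x y | x y. x \<in> carrier G \<and> x \<otimes> x = \<one>
              \<and> y \<in> carrier G \<and> y \<otimes> y = \<one>}"
  shows "Bc \<lhd> AutoGroup LL" "AutoGroup LL Mod Bc \<cong> (AutoGroup LL)\<lparr>carrier := Ac\<rparr>"
    "(AutoGroup LL)\<lparr>carrier := Bc\<rparr> \<cong> G\<lparr>carrier := Hs\<rparr> \<times>\<times> G\<lparr>carrier := Hs\<rparr>"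
proof -
  note char = auto_L_char[OF fin m0]
  have idG: "(\<lambda>x\<in>carrier G. x) \<in> auto G" by (rule id_in_auto)
  have Fid: "Fplus G id (\<lambda>x\<in>carrier G. x) x y = Fplus G id id x y" for x y
    by (rule Fplus_cong) simp
  have Bc_alt: "Bc = {Fplus G id id x y | x y. x \<in> Hs \<and> y \<in> Hs}" unfolding Bc_def Hs_def by auto
  have Bc_auto: "Fplus G id id x y \<in> auto LL" if "x \<in> Hs" "y \<in> Hs" for x y
    using Fplus_auto[OF id_auto_Klein idG that fin] Fid by simp
  have Bsub: "Bc \<subseteq> auto LL" using Bc_auto unfolding Bc_alt by blast
  have Asub: "Ac \<subseteq> auto LL" unfolding Ac_def using Fplus_auto[OF _ _ one_Hs one_Hs fin] by blast
  have psiA: "psi G \<phi> \<in> Ac" if phi: "\<phi> \<in> auto LL" for \<phi>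
  proof -
    have "psi G \<phi> = psi G (Fplus G (\<lambda>A. fst (\<phi> (A, \<one>))) (\<lambda>x\<in>carrier G. snd (\<phi> (K1, x)))
                (snd (\<phi> (Ka, \<one>))) (snd (\<phi> (Kb, \<one>))))" by (subst char(5)[OF phi]) (rule refl)
    also have "\<dots> = Fplus G (\<lambda>A. fst (\<phi> (A, \<one>))) (\<lambda>x\<in>carrier G. snd (\<phi> (K1, x))) \<one> \<one>"
      by (rule psi_Fplus[OF char(2)[OF phi]])
    finally show ?thesis unfolding Ac_def using char(1,2)[OF phi] by blast
  qed
  have psi_fix: "psi G F = F" if "F \<in> Ac" for F
    using that psi_Fplus unfolding Ac_def by blast
  have img: "psi G ` auto LL = Ac"
  proof
    show "psi G ` auto LL \<subseteq> Ac" using psiA by blast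
    show "Ac \<subseteq> psi G ` auto LL"
    proof
      fix F assume "F \<in> Ac" then show "F \<in> psi G ` auto LL"
        using psi_fix Asub by (metis image_eqI subsetD)
    qed
  qed
  have grpA: "group (AutoGroup LL)" by (rule group_Aut)
  have psi_hom: "psi G \<in> hom (AutoGroup LL) (AutoGroup LL)"
  proof (rule homI)
    fix \<phi> assume "\<phi> \<in> carrier (AutoGroup LL)"
    then show "psi G \<phi> \<in> carrier (AutoGroup LL)" using psiA Asub by auto
  next
    fix g f assume g: "g \<in> carrier (AutoGroup LL)" and f: "f \<in> carrier (AutoGroup LL)"
    then have ga: "g \<in> auto LL" and fa: "f \<in> auto LL" by auto
    have pa: "psi G g \<in> auto LL" "psi G f \<in> auto LL" using psiA ga fa Asub by auto
    have "psi G (compose (carrier LL) g f) = compose (carrier LL) (psi G g) (psi G f)"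
    proof -
      have "psi G (compose (carrier LL) g f) =
        psi G (compose (carrier LL) (Fplus G (\<lambda>A. fst (g (A, \<one>))) (\<lambda>x\<in>carrier G. snd (g (K1, x)))
                (snd (g (Ka, \<one>))) (snd (g (Kb, \<one>)))) (Fplus G (\<lambda>A. fst (f (A, \<one>))) (\<lambda>x\<in>carrier G. snd (f (K1, x)))
                (snd (f (Ka, \<one>))) (snd (f (Kb, \<one>)))))"
        by (subst char(5)[OF ga], subst char(5)[OF fa]) (rule refl)
      also have "\<dots> = compose (carrier LL) (Fplus G (\<lambda>A. fst (g (A, \<one>))) (\<lambda>x\<in>carrier G. snd (g (K1, x))) \<one> \<one>)
           (Fplus G (\<lambda>A. fst (f (A, \<one>))) (\<lambda>x\<in>carrier G. snd (f (K1, x))) \<one> \<one>)"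
        by (rule psi_compose) (use char[OF ga] char[OF fa] in auto)
      also have "\<dots> = compose (carrier LL) (psi G g) (psi G f)"
        using psi_Fplus[OF char(2)[OF ga]] psi_Fplus[OF char(2)[OF fa]] char(5)[OF ga, symmetric] char(5)[OF fa, symmetric]
        by metis
      finally show ?thesis .
    qed
    then show "psi G (g \<otimes>\<^bsub>AutoGroup LL\<^esub> f) = psi G g \<otimes>\<^bsub>AutoGroup LL\<^esub> psi G f"
      using Aut_mult[OF ga fa] Aut_mult[OF pa] by simp
  qed
  have subA: "subgroup Ac (AutoGroup LL)"
  proof -
    have "group_hom (AutoGroup LL) (AutoGroup LL) (psi G)"
      by (simp add: group_hom_def group_hom_axioms_def grpA psi_hom)
    then show ?thesis using group_hom.img_is_subgroup img by fastforce
  qed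
  have grpAc: "group ((AutoGroup LL)\<lparr>carrier := Ac\<rparr>)" by (rule subgroup.subgroup_is_group[OF subA grpA])
  have psi_hom2: "psi G \<in> hom (AutoGroup LL) ((AutoGroup LL)\<lparr>carrier := Ac\<rparr>)"
    using psi_hom psiA unfolding hom_def by auto
  have gh: "group_hom (AutoGroup LL) ((AutoGroup LL)\<lparr>carrier := Ac\<rparr>) (psi G)"
    by (simp add: group_hom_def group_hom_axioms_def grpA grpAc psi_hom2)
  have ker: "kernel (AutoGroup LL) ((AutoGroup LL)\<lparr>carrier := Ac\<rparr>) (psi G) = Bc"
  proof
    show "kernel (AutoGroup LL) ((AutoGroup LL)\<lparr>carrier := Ac\<rparr>) (psi G) \<subseteq> Bc"
    proof
      fix \<phi> assume "\<phi> \<in> kernel (AutoGroup LL) ((AutoGroup LL)\<lparr>carrier := Ac\<rparr>) (psi G)"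
      then have phi: "\<phi> \<in> auto LL" and k: "psi G \<phi> = (\<lambda>x\<in>carrier LL. x)" unfolding kernel_def by auto
      define f' where "f' = (\<lambda>A. fst (\<phi> (A, \<one>)))"
      define f'' where "f'' = (\<lambda>x\<in>carrier G. snd (\<phi> (K1, x)))"
      have e: "\<phi> = Fplus G f' f'' (snd (\<phi> (Ka, \<one>))) (snd (\<phi> (Kb, \<one>)))"
        unfolding f'_def f''_def by (rule char(5)[OF phi])
      have "psi G \<phi> = Fplus G f' f'' \<one> \<one>"
        unfolding f'_def f''_def by (subst char(5)[OF phi]) (rule psi_Fplus[OF char(2)[OF phi]])
      with k have k2: "Fplus G f' f'' \<one> \<one> = (\<lambda>x\<in>carrier LL. x)" by simp
      have f''c: "f'' x \<in> carrier G" if "x \<in> carrier G" for x using auto_G_facts[OF char(2)[OF phi]] that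
        unfolding f''_def .
      have f'id: "f' A = A" for A using fun_cong[OF k2, of "(A, \<one>)"] f''c[of \<one>] by simp
      have f''id: "f'' x = x" if "x \<in> carrier G" for x using fun_cong[OF k2, of "(K1, x)"] f''c[OF that] that by simp
      have "Fplus G f' f'' (snd (\<phi> (Ka, \<one>))) (snd (\<phi> (Kb, \<one>))) = Fplus G id id (snd (\<phi> (Ka, \<one>))) (snd (\<phi> (Kb, \<one>)))"
        unfolding Fplus_def by (rule restrict_ext) (auto simp: f'id f''id)
      with e have "\<phi> = Fplus G id id (snd (\<phi> (Ka, \<one>))) (snd (\<phi> (Kb, \<one>)))" by simp
      then show "\<phi> \<in> Bc" unfolding Bc_alt using char(3,4)[OF phi] by blast
    qed
    show "Bc \<subseteq> kernel (AutoGroup LL) ((AutoGroup LL)\<lparr>carrier := Ac\<rparr>) (psi G)"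
    proof
      fix \<phi> assume "\<phi> \<in> Bc"
      then obtain x y where xy: "x \<in> Hs" "y \<in> Hs" and e: "\<phi> = Fplus G id id x y" unfolding Bc_alt by blast
      have "psi G \<phi> = Fplus G id (\<lambda>x\<in>carrier G. x) \<one> \<one>" unfolding e Fid[symmetric]
        by (rule psi_Fplus[OF idG])
      also have "\<dots> = (\<lambda>x\<in>carrier LL. x)" unfolding Fplus_def
        by (rule restrict_ext) auto
      finally show "\<phi> \<in> kernel (AutoGroup LL) ((AutoGroup LL)\<lparr>carrier := Ac\<rparr>) (psi G)"
        unfolding kernel_def using Bc_auto xy e by simp
    qed
  qed
  show "Bc \<lhd> AutoGroup LL" using group_hom.normal_kernel[OF gh] ker by simp
  show "AutoGroup LL Mod Bc \<cong> (AutoGroup LL)\<lparr>carrier := Ac\<rparr>"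
    using group_hom.FactGroup_iso[OF gh] ker img by simp
  let ?th = "\<lambda>\<phi>. (snd (\<phi> (Ka, \<one>)), snd (\<phi> (Kb, \<one>)))"
  have thF: "?th (Fplus G id id x y) = (x, y)" if "x \<in> Hs" "y \<in> Hs" for x y
    using that by (simp add: Hs_def)
  have "?th \<in> iso ((AutoGroup LL)\<lparr>carrier := Bc\<rparr>) (G\<lparr>carrier := Hs\<rparr> \<times>\<times> G\<lparr>carrier := Hs\<rparr>)"
  proof (rule isoI)
    show "?th \<in> hom ((AutoGroup LL)\<lparr>carrier := Bc\<rparr>) (G\<lparr>carrier := Hs\<rparr> \<times>\<times> G\<lparr>carrier := Hs\<rparr>)"
    proof (rule homI)
      fix \<phi> assume "\<phi> \<in> carrier ((AutoGroup LL)\<lparr>carrier := Bc\<rparr>)"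
      then obtain x y where xy: "x \<in> Hs" "y \<in> Hs" and e: "\<phi> = Fplus G id id x y" unfolding Bc_alt by auto
      show "?th \<phi> \<in> carrier (G\<lparr>carrier := Hs\<rparr> \<times>\<times> G\<lparr>carrier := Hs\<rparr>)" using thF[OF xy] xy e by simp
    next
      fix \<phi> \<psi> assume "\<phi> \<in> carrier ((AutoGroup LL)\<lparr>carrier := Bc\<rparr>)" "\<psi> \<in> carrier ((AutoGroup LL)\<lparr>carrier := Bc\<rparr>)"
      then obtain x y x' y' where xy: "x \<in> Hs" "y \<in> Hs" and e: "\<phi> = Fplus G id id x y"
        and xy': "x' \<in> Hs" "y' \<in> Hs" and e': "\<psi> = Fplus G id id x' y'" unfolding Bc_alt by auto
      have c: "x \<in> carrier G" "y \<in> carrier G" "x' \<in> carrier G" "y' \<in> carrier G" using xy xy' by (auto simp: Hs_def)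
      have "\<phi> \<otimes>\<^bsub>(AutoGroup LL)\<lparr>carrier := Bc\<rparr>\<^esub> \<psi> = compose (carrier LL) \<phi> \<psi>"
        using Aut_mult[OF Bc_auto[OF xy] Bc_auto[OF xy']] e e' by simp
      then show "?th (\<phi> \<otimes>\<^bsub>(AutoGroup LL)\<lparr>carrier := Bc\<rparr>\<^esub> \<psi>) = ?th \<phi> \<otimes>\<^bsub>G\<lparr>carrier := Hs\<rparr> \<times>\<times> G\<lparr>carrier := Hs\<rparr>\<^esub> ?th \<psi>"
        using e e' c thF[OF xy] thF[OF xy'] by (simp add: compose_def m_comm)
    qed
    show "bij_betw ?th (carrier ((AutoGroup LL)\<lparr>carrier := Bc\<rparr>)) (carrier (G\<lparr>carrier := Hs\<rparr> \<times>\<times> G\<lparr>carrier := Hs\<rparr>))"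
    proof (rule bij_betw_imageI)
      show "inj_on ?th (carrier ((AutoGroup LL)\<lparr>carrier := Bc\<rparr>))"
      proof (rule inj_onI)
        fix \<phi> \<psi> assume "\<phi> \<in> carrier ((AutoGroup LL)\<lparr>carrier := Bc\<rparr>)" "\<psi> \<in> carrier ((AutoGroup LL)\<lparr>carrier := Bc\<rparr>)"
          and eq: "?th \<phi> = ?th \<psi>"
        then obtain x y x' y' where xy: "x \<in> Hs" "y \<in> Hs" and e: "\<phi> = Fplus G id id x y"
          and xy': "x' \<in> Hs" "y' \<in> Hs" and e': "\<psi> = Fplus G id id x' y'" unfolding Bc_alt by auto
        have t1: "?th \<phi> = (x, y)" using e thF[OF xy] by (simp only:)
        have t2: "?th \<psi> = (x', y')" using e' thF[OF xy'] by (simp only:)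
        from eq t1 t2 have "(x, y) = (x', y')" by (simp only:)
        then show "\<phi> = \<psi>" using e e' by (simp only: prod.inject)
      qed
      show "?th ` carrier ((AutoGroup LL)\<lparr>carrier := Bc\<rparr>) = carrier (G\<lparr>carrier := Hs\<rparr> \<times>\<times> G\<lparr>carrier := Hs\<rparr>)"
      proof
        show "?th ` carrier ((AutoGroup LL)\<lparr>carrier := Bc\<rparr>) \<subseteq> carrier (G\<lparr>carrier := Hs\<rparr> \<times>\<times> G\<lparr>carrier := Hs\<rparr>)"
        proof
          fix z assume "z \<in> ?th ` carrier ((AutoGroup LL)\<lparr>carrier := Bc\<rparr>)"
          then obtain \<phi> where "\<phi> \<in> Bc" "z = ?th \<phi>" by auto
          then obtain x y where xy: "x \<in> Hs" "y \<in> Hs" and e: "\<phi> = Fplus G id id x y" and z: "z = ?th \<phi>"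
            unfolding Bc_alt by blast
          have "?th \<phi> = (x, y)" using e thF[OF xy] by (simp only:)
          then show "z \<in> carrier (G\<lparr>carrier := Hs\<rparr> \<times>\<times> G\<lparr>carrier := Hs\<rparr>)" using z xy by simp
        qed
        show "carrier (G\<lparr>carrier := Hs\<rparr> \<times>\<times> G\<lparr>carrier := Hs\<rparr>) \<subseteq> ?th ` carrier ((AutoGroup LL)\<lparr>carrier := Bc\<rparr>)"
        proof
          fix z assume "z \<in> carrier (G\<lparr>carrier := Hs\<rparr> \<times>\<times> G\<lparr>carrier := Hs\<rparr>)"
          then obtain x y where z: "z = (x, y)" "x \<in> Hs" "y \<in> Hs" by auto
          then have "Fplus G id id x y \<in> carrier ((AutoGroup LL)\<lparr>carrier := Bc\<rparr>)" unfolding Bc_alt by auto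
          moreover have "z = ?th (Fplus G id id x y)" using thF[OF z(2,3)] z(1) by (simp only:)
          ultimately show "z \<in> ?th ` carrier ((AutoGroup LL)\<lparr>carrier := Bc\<rparr>)" by (rule rev_image_eqI[where f="?th"])
        qed
      qed
    qed
  qed
  then show "(AutoGroup LL)\<lparr>carrier := Bc\<rparr> \<cong> G\<lparr>carrier := Hs\<rparr> \<times>\<times> G\<lparr>carrier := Hs\<rparr>" by (rule is_isoI)
qed

end


lemma sq_pow2: "monoid G \<Longrightarrow> x \<in> carrier G \<Longrightarrow> x [^]\<^bsub>G\<^esub> (2::nat) = x \<otimes>\<^bsub>G\<^esub> x"
  by (simp add: numeral_2_eq_2 monoid.l_one)

lemma odd_sq_one:
  assumes "group M1" "m \<in> carrier M1" "m \<otimes>\<^bsub>M1\<^esub> m = \<one>\<^bsub>M1\<^esub>" "odd (order M1)"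
  shows "m = \<one>\<^bsub>M1\<^esub>"
proof -
  interpret M1: group M1 by fact
  have "m [^]\<^bsub>M1\<^esub> (2::nat) = \<one>\<^bsub>M1\<^esub>" using assms sq_pow2[OF M1.is_monoid] by simp
  then have d2: "M1.ord m dvd 2" using M1.pow_eq_id[OF assms(2)] by simp
  have "M1.ord m dvd order M1" using M1.ord_dvd_group_order[OF assms(2)] .
  then have "odd (M1.ord m)" using assms(4) by (metis dvd_trans)
  have "M1.ord m \<le> 2" using dvd_imp_le[OF d2] by simp
  moreover have "M1.ord m \<noteq> 0" using d2 by (metis dvd_0_left_iff zero_neq_numeral)
  ultimately have "M1.ord m = 1 \<or> M1.ord m = 2" by linarith
  with \<open>odd (M1.ord m)\<close> have "M1.ord m = 1" by auto
  then show ?thesis using M1.ord_eq_1[OF assms(2)] by simp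
qed

lemma exists_nonsq:
  assumes "group M" "exponent M > 2"
  shows "\<exists>m \<in> carrier M. m \<otimes>\<^bsub>M\<^esub> m \<noteq> \<one>\<^bsub>M\<^esub>"
proof (rule ccontr)
  interpret M: group M by fact
  assume "\<not> ?thesis"
  then have "\<forall>m\<in>carrier M. m \<otimes>\<^bsub>M\<^esub> m = \<one>\<^bsub>M\<^esub>" by blast
  then have "\<forall>m\<in>carrier M. M.ord m dvd 2"
  proof (intro ballI)
    fix m assume all: "\<forall>m\<in>carrier M. m \<otimes>\<^bsub>M\<^esub> m = \<one>\<^bsub>M\<^esub>" and m: "m \<in> carrier M"
    have "m [^]\<^bsub>M\<^esub> (2::nat) = \<one>\<^bsub>M\<^esub>" using sq_pow2[OF M.is_monoid m] all m by simp
    then show "M.ord m dvd 2" using M.pow_eq_id[OF m] by simp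
  qed
  then have "exponent M dvd 2" unfolding exponent_def by (auto intro: Lcm_least)
  then have "exponent M \<le> 2" by (rule dvd_imp_le) simp
  then show False using assms(2) by simp
qed

lemma bit_add:
  fixes a b i :: int
  assumes "i \<ge> 1" "a = 0 \<or> a = i" "b = 0 \<or> b = i"
  shows "(if (a + b) mod (2 * i) = 0 then 0 else 1) = ((if a = 0 then 0 else 1) + (if b = 0 then 0 else 1)) mod (2::int)"
proof -
  have m1: "i mod (2 * i) = i" using assms(1) by (simp add: mod_pos_pos_trivial)
  have m2: "(i + i) mod (2 * i) = 0" by (metis mod_self mult_2)
  show ?thesis using assms(2,3) m1 m2 assms(1) by (elim disjE) simp_all
qed

lemma half_vals:
  fixes a i :: int
  assumes "i \<ge> 1" "0 \<le> a" "a < 2 * i" "(a + a) mod (2 * i) = 0"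
  shows "a = 0 \<or> a = i"
proof -
  have "(2 * a) mod (2 * i) = 0" using assms(4) by (metis mult_2)
  then have "2 * i dvd 2 * a" by (simp only: dvd_eq_mod_eq_0)
  then have "i dvd a" by simp
  then obtain k where "a = i * k" by (auto elim: dvdE)
  have k0: "k \<ge> 0"
  proof (rule ccontr)
    assume "\<not> k \<ge> 0" then have "i * k < 0" using assms(1) by (simp add: mult_pos_neg)
    then show False using \<open>a = i * k\<close> assms(2) by simp
  qed
  have k2: "k < 2"
  proof (rule ccontr)
    assume "\<not> k < 2" then have "i * 2 \<le> i * k" using assms(1) by (intro mult_left_mono) auto
    then show False using \<open>a = i * k\<close> assms(3) by simp
  qed
  from k0 k2 have "k = 0 \<or> k = 1" by auto
  then show ?thesis using \<open>a = i * k\<close> by auto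
qed


lemma a2:
  fixes M :: "('a,'b) monoid_scheme" and M1 :: "('c,'d) monoid_scheme" and s :: nat and i :: "nat \<Rightarrow> nat"
  assumes cg: "comm_group M" and ii: "\<forall>j<s. i j \<ge> 1"
    and g1: "group M1" and odd: "odd (order M1)"
    and h: "h \<in> iso M (product_group {..<s} (\<lambda>j. integer_mod_group (2 * i j)) \<times>\<times> M1)"
  defines "H \<equiv> {x \<in> carrier M. x \<otimes>\<^bsub>M\<^esub> x = \<one>\<^bsub>M\<^esub>}"
  shows "M\<lparr>carrier := H\<rparr> \<times>\<times> M\<lparr>carrier := H\<rparr> \<cong> product_group {..<2 * s} (\<lambda>_. integer_mod_group 2)"
proof -
  interpret M: comm_group M by fact
  let ?Z = "\<lambda>j. integer_mod_group (2 * i j)"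
  let ?P = "product_group {..<s} ?Z \<times>\<times> M1"
  have gP: "group ?P" by (simp add: DirProd_group g1)
  have hh: "h \<in> hom M ?P" using h by (simp add: iso_def)
  have gh: "group_hom M ?P h" using hh by (simp add: group_hom_def group_hom_axioms_def M.is_group gP)
  have hinj: "inj_on h (carrier M)" and hsurj: "h ` carrier M = carrier ?P"
    using h by (auto simp: iso_def bij_betw_def)
  have hc: "h x \<in> carrier ?P" if "x \<in> carrier M" for x using hh that by (auto simp: hom_def)
  have ipos: "int (i j) \<ge> 1" if "j < s" for j using ii that by auto
  have two: "int (2 * i j) = 2 * int (i j)" for j by simp
  have hm: "fst (h (x \<otimes>\<^bsub>M\<^esub> x')) j = (fst (h x) j + fst (h x') j) mod (2 * int (i j))"
    if "x \<in> carrier M" "x' \<in> carrier M" "j < s" for x x' j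
  proof -
    have "h (x \<otimes>\<^bsub>M\<^esub> x') = h x \<otimes>\<^bsub>?P\<^esub> h x'" using group_hom.hom_mult[OF gh that(1,2)] .
    then show ?thesis using that(3) by (simp add: mult_DirProd')
  qed
  have keyH: "(\<forall>j<s. fst (h x) j = 0 \<or> fst (h x) j = int (i j)) \<and> snd (h x) = \<one>\<^bsub>M1\<^esub>"
    if x: "x \<in> H" for x
  proof -
    have xc: "x \<in> carrier M" and xx: "x \<otimes>\<^bsub>M\<^esub> x = \<one>\<^bsub>M\<^esub>" using x by (auto simp: H_def)
    have e: "h x \<otimes>\<^bsub>?P\<^esub> h x = \<one>\<^bsub>?P\<^esub>"
      using group_hom.hom_mult[OF gh xc xc] xx group_hom.hom_one[OF gh] by simp
    have hxc: "fst (h x) \<in> (\<Pi>\<^sub>E j\<in>{..<s}. carrier (?Z j))" "snd (h x) \<in> carrier M1"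
      using hc[OF xc] by (auto simp: mem_Times_iff)
    have "\<forall>j<s. fst (h x) j = 0 \<or> fst (h x) j = int (i j)"
    proof (intro allI impI)
      fix j assume j: "j < s"
      have m0: "(fst (h x) j + fst (h x) j) mod (2 * int (i j)) = 0"
        using fun_cong[OF arg_cong[OF e, of fst], of j] j by (simp add: mult_DirProd')
      have m1: "fst (h x) j \<in> carrier (?Z j)" using hxc(1) j by (auto simp: PiE_iff)
      have "carrier (?Z j) = {0..<int (2 * i j)}" using ipos[OF j] by (simp add: carrier_integer_mod_group)
      with m1 have "0 \<le> fst (h x) j" "fst (h x) j < 2 * int (i j)" by auto
      then show "fst (h x) j = 0 \<or> fst (h x) j = int (i j)"
        using half_vals[OF ipos[OF j] _ _ m0] by blast
    qed
    moreover have "snd (h x) \<otimes>\<^bsub>M1\<^esub> snd (h x) = \<one>\<^bsub>M1\<^esub>"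
      using arg_cong[OF e, of snd] by (simp add: mult_DirProd')
    then have "snd (h x) = \<one>\<^bsub>M1\<^esub>" using odd_sq_one[OF g1 hxc(2) _ odd] by simp
    ultimately show ?thesis by simp
  qed
  have hext: "fst (h x) \<in> extensional {..<s}" if "x \<in> carrier M" for x
    using hc[OF that] by (auto simp: mem_Times_iff PiE_iff)
  define bt where "bt = (\<lambda>(z::int). if z = 0 then 0 else (1::int))"
  define \<Theta> where "\<Theta> = (\<lambda>p. \<lambda>j\<in>{..<2*s}. if j < s then bt (fst (h (fst p)) j) else bt (fst (h (snd p)) (j - s)))"
  have HM: "H \<subseteq> carrier M" by (auto simp: H_def)
  have Zc2: "carrier (integer_mod_group 2) = {0..<2}" by (simp add: carrier_integer_mod_group)
  have \<Theta>c: "\<Theta> p \<in> carrier (product_group {..<2 * s} (\<lambda>_. integer_mod_group 2))" for p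
    unfolding \<Theta>_def Zc2 by (auto simp: bt_def)
  have "\<Theta> \<in> iso (M\<lparr>carrier := H\<rparr> \<times>\<times> M\<lparr>carrier := H\<rparr>) (product_group {..<2 * s} (\<lambda>_. integer_mod_group 2))"
  proof (rule isoI)
    show "\<Theta> \<in> hom (M\<lparr>carrier := H\<rparr> \<times>\<times> M\<lparr>carrier := H\<rparr>) (product_group {..<2 * s} (\<lambda>_. integer_mod_group 2))"
    proof (rule homI)
      fix p show "\<Theta> p \<in> carrier (product_group {..<2 * s} (\<lambda>_. integer_mod_group 2))" by (rule \<Theta>c)
    next
      fix p q assume p: "p \<in> carrier (M\<lparr>carrier := H\<rparr> \<times>\<times> M\<lparr>carrier := H\<rparr>)"
        and q: "q \<in> carrier (M\<lparr>carrier := H\<rparr> \<times>\<times> M\<lparr>carrier := H\<rparr>)"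
      obtain x y where pe: "p = (x, y)" and xy: "x \<in> H" "y \<in> H" using p by auto
      obtain x' y' where qe: "q = (x', y')" and xy': "x' \<in> H" "y' \<in> H" using q by auto
      have c: "x \<in> carrier M" "y \<in> carrier M" "x' \<in> carrier M" "y' \<in> carrier M" using xy xy' HM by auto
      have pq: "p \<otimes>\<^bsub>M\<lparr>carrier := H\<rparr> \<times>\<times> M\<lparr>carrier := H\<rparr>\<^esub> q = (x \<otimes>\<^bsub>M\<^esub> x', y \<otimes>\<^bsub>M\<^esub> y')"
        using pe qe by simp
      show "\<Theta> (p \<otimes>\<^bsub>M\<lparr>carrier := H\<rparr> \<times>\<times> M\<lparr>carrier := H\<rparr>\<^esub> q) =
            \<Theta> p \<otimes>\<^bsub>product_group {..<2 * s} (\<lambda>_. integer_mod_group 2)\<^esub> \<Theta> q"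
      proof (rule ext)
        fix j
        show "\<Theta> (p \<otimes>\<^bsub>M\<lparr>carrier := H\<rparr> \<times>\<times> M\<lparr>carrier := H\<rparr>\<^esub> q) j =
            (\<Theta> p \<otimes>\<^bsub>product_group {..<2 * s} (\<lambda>_. integer_mod_group 2)\<^esub> \<Theta> q) j"
        proof (cases "j < 2 * s")
          case False then show ?thesis unfolding \<Theta>_def by simp
        next
          case True
          show ?thesis
          proof (cases "j < s")
            case js: True
            have "bt (fst (h (x \<otimes>\<^bsub>M\<^esub> x')) j) = (bt (fst (h x) j) + bt (fst (h x') j)) mod 2"
              unfolding hm[OF c(1,3) js] bt_def
              by (rule bit_add[OF ipos[OF js]]) (use keyH[OF xy(1)] keyH[OF xy'(1)] js in auto)
            then show ?thesis unfolding \<Theta>_def using pq pe qe True js by simp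
          next
            case js: False
            then have js': "j - s < s" using True by simp
            have "bt (fst (h (y \<otimes>\<^bsub>M\<^esub> y')) (j - s)) = (bt (fst (h y) (j - s)) + bt (fst (h y') (j - s))) mod 2"
              unfolding hm[OF c(2,4) js'] bt_def
              by (rule bit_add[OF ipos[OF js']]) (use keyH[OF xy(2)] keyH[OF xy'(2)] js' in auto)
            then show ?thesis unfolding \<Theta>_def using pq pe qe True js by simp
          qed
        qed
      qed
    qed
    have fst_eq: "fst (h x) = fst (h x')" if xx: "x \<in> H" "x' \<in> H" and b: "\<forall>j<s. bt (fst (h x) j) = bt (fst (h x') j)" for x x'
    proof (rule ext)
      fix j show "fst (h x) j = fst (h x') j"
      proof (cases "j < s")
        case True
        then show ?thesis using keyH[OF xx(1)] keyH[OF xx(2)] b ipos[OF True] unfolding bt_def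
          by (metis one_neq_zero zero_less_one not_one_le_zero)
      next
        case False
        have "x \<in> carrier M" "x' \<in> carrier M" using xx HM by auto
        then have "fst (h x) j = undefined" "fst (h x') j = undefined"
          using hext[of x] hext[of x'] False by (auto simp: extensional_def)
        then show ?thesis by simp
      qed
    qed
    have h_eq: "x = x'" if xx: "x \<in> H" "x' \<in> H" and b: "\<forall>j<s. bt (fst (h x) j) = bt (fst (h x') j)" for x x'
    proof -
      have "h x = h x'" using fst_eq[OF xx b] keyH[OF xx(1)] keyH[OF xx(2)] by (simp add: prod_eq_iff)
      then show ?thesis using hinj xx HM by (auto simp: inj_on_def)
    qed
    show "bij_betw \<Theta> (carrier (M\<lparr>carrier := H\<rparr> \<times>\<times> M\<lparr>carrier := H\<rparr>)) (carrier (product_group {..<2 * s} (\<lambda>_. integer_mod_group 2)))"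
    proof (rule bij_betw_imageI)
      show "inj_on \<Theta> (carrier (M\<lparr>carrier := H\<rparr> \<times>\<times> M\<lparr>carrier := H\<rparr>))"
      proof (rule inj_onI)
        fix p q assume p: "p \<in> carrier (M\<lparr>carrier := H\<rparr> \<times>\<times> M\<lparr>carrier := H\<rparr>)"
          and q: "q \<in> carrier (M\<lparr>carrier := H\<rparr> \<times>\<times> M\<lparr>carrier := H\<rparr>)" and e: "\<Theta> p = \<Theta> q"
        obtain x y where pe: "p = (x, y)" and xy: "x \<in> H" "y \<in> H" using p by auto
        obtain x' y' where qe: "q = (x', y')" and xy': "x' \<in> H" "y' \<in> H" using q by auto
        have "\<forall>j<s. bt (fst (h x) j) = bt (fst (h x') j)"
        proof (intro allI impI)
          fix j assume j: "j < s"
          show "bt (fst (h x) j) = bt (fst (h x') j)" using fun_cong[OF e, of j] j pe qe unfolding \<Theta>_def by simp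
        qed
        then have "x = x'" using h_eq xy(1) xy'(1) by blast
        moreover have "\<forall>j<s. bt (fst (h y) j) = bt (fst (h y') j)"
        proof (intro allI impI)
          fix j assume j: "j < s"
          show "bt (fst (h y) j) = bt (fst (h y') j)" using fun_cong[OF e, of "s + j"] j pe qe unfolding \<Theta>_def by simp
        qed
        then have "y = y'" using h_eq xy(2) xy'(2) by blast
        ultimately show "p = q" using pe qe by simp
      qed
      show "\<Theta> ` carrier (M\<lparr>carrier := H\<rparr> \<times>\<times> M\<lparr>carrier := H\<rparr>) = carrier (product_group {..<2 * s} (\<lambda>_. integer_mod_group 2))"
      proof
        show "\<Theta> ` carrier (M\<lparr>carrier := H\<rparr> \<times>\<times> M\<lparr>carrier := H\<rparr>) \<subseteq> carrier (product_group {..<2 * s} (\<lambda>_. integer_mod_group 2))"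
          using \<Theta>c by blast
        show "carrier (product_group {..<2 * s} (\<lambda>_. integer_mod_group 2)) \<subseteq> \<Theta> ` carrier (M\<lparr>carrier := H\<rparr> \<times>\<times> M\<lparr>carrier := H\<rparr>)"
        proof
          fix t assume "t \<in> carrier (product_group {..<2 * s} (\<lambda>_. integer_mod_group 2))"
          then have t: "t \<in> (\<Pi>\<^sub>E j\<in>{..<2*s}. {0..<2})" using Zc2 by simp
          have pre: "\<exists>x\<in>H. \<forall>j<s. bt (fst (h x) j) = t (k + j)" if k: "k = 0 \<or> k = s" for k
          proof -
            define a where "a = (\<lambda>j\<in>{..<s}. if t (k + j) = 0 then 0 else int (i j))"
            have ac: "(a, \<one>\<^bsub>M1\<^esub>) \<in> carrier ?P"
              using ipos by (auto simp: a_def PiE_iff carrier_integer_mod_group group.is_monoid[OF g1])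
            then obtain x where xc: "x \<in> carrier M" and hx: "h x = (a, \<one>\<^bsub>M1\<^esub>)" using hsurj
              by (metis imageE)
            have "(a, \<one>\<^bsub>M1\<^esub>) \<otimes>\<^bsub>?P\<^esub> (a, \<one>\<^bsub>M1\<^esub>) = \<one>\<^bsub>?P\<^esub>"
            proof -
              have "(\<lambda>j\<in>{..<s}. (a j + a j) mod int (2 * i j)) = (\<lambda>j\<in>{..<s}. 0)"
              proof (rule restrict_ext)
                fix j assume "j \<in> {..<s}"
                then show "(a j + a j) mod int (2 * i j) = 0" unfolding a_def
                  by (auto simp: two)
              qed
              then show ?thesis using group.is_monoid[OF g1] by (simp add: monoid.l_one)
            qed
            then have "h (x \<otimes>\<^bsub>M\<^esub> x) = h \<one>\<^bsub>M\<^esub>"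
              using group_hom.hom_mult[OF gh xc xc] group_hom.hom_one[OF gh] hx by simp
            then have "x \<otimes>\<^bsub>M\<^esub> x = \<one>\<^bsub>M\<^esub>" using hinj xc by (auto simp: inj_on_def)
            then have xH: "x \<in> H" using xc by (simp add: H_def)
            have "\<forall>j<s. bt (fst (h x) j) = t (k + j)"
            proof (intro allI impI)
              fix j assume j: "j < s"
              have "k + j < 2 * s" using j k by auto
              then have "t (k + j) \<in> {0..<2}" using t by auto
              then have "t (k + j) = 0 \<or> t (k + j) = 1" by auto
              then show "bt (fst (h x) j) = t (k + j)" using hx j ipos[OF j] unfolding a_def bt_def by auto
            qed
            then show ?thesis using xH by blast
          qed
          obtain x where xH: "x \<in> H" and bx: "\<forall>j<s. bt (fst (h x) j) = t (0 + j)" using pre[of 0] by auto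
          obtain y where yH: "y \<in> H" and byy: "\<forall>j<s. bt (fst (h y) j) = t (s + j)" using pre[of s] by auto
          have "\<Theta> (x, y) = t"
          proof (rule ext)
            fix j show "\<Theta> (x, y) j = t j"
            proof (cases "j < 2 * s")
              case False then show ?thesis using t unfolding \<Theta>_def by (auto simp: PiE_def extensional_def)
            next
              case True
              show ?thesis
              proof (cases "j < s")
                case True then show ?thesis using bx \<open>j < 2 * s\<close> unfolding \<Theta>_def by simp
              next
                case False
                then have "j - s < s" "s + (j - s) = j" using \<open>j < 2 * s\<close> by auto
                then show ?thesis using byy[rule_format, of "j - s"] False \<open>j < 2 * s\<close> unfolding \<Theta>_def by simp
              qed
            qed
          qed
          moreover have "(x, y) \<in> carrier (M\<lparr>carrier := H\<rparr> \<times>\<times> M\<lparr>carrier := H\<rparr>)" using xH yH by simp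
          ultimately show "t \<in> \<Theta> ` carrier (M\<lparr>carrier := H\<rparr> \<times>\<times> M\<lparr>carrier := H\<rparr>)" by (metis image_eqI)
        qed
      qed
    qed
  qed
  then show ?thesis by (rule is_isoI)
qed


theorem proposition5p8:
  fixes M :: "('a, 'b) monoid_scheme"
    and M1 :: "('c, 'd) monoid_scheme"
    and s :: nat and i :: "nat \<Rightarrow> nat"
  assumes "comm_group M" and "finite (carrier M)"
    and "even (order M)" and "exponent M > 2"
    and "s \<ge> 1" and "\<forall>j<s. i j \<ge> 1"
    and "group M1" and "finite (carrier M1)" and "odd (order M1)"
    and "M \<cong> (product_group {..<s} (\<lambda>j. integer_mod_group (2 * i j)) \<times>\<times> M1)"
  defines "H \<equiv> {x \<in> carrier M. x \<otimes>\<^bsub>M\<^esub> x = \<one>\<^bsub>M\<^esub>}"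
    and "\<A> \<equiv> {Fplus M f' f'' \<one>\<^bsub>M\<^esub> \<one>\<^bsub>M\<^esub> | f' f''. f' \<in> auto Klein \<and> f'' \<in> auto M}"
    and "\<B> \<equiv> {Fplus M id id x y | x y. x \<in> carrier M \<and> x \<otimes>\<^bsub>M\<^esub> x = \<one>\<^bsub>M\<^esub>
              \<and> y \<in> carrier M \<and> y \<otimes>\<^bsub>M\<^esub> y = \<one>\<^bsub>M\<^esub>}"
  shows "((AutoGroup (L_grp M))\<lparr>carrier := \<B>\<rparr> \<cong> M\<lparr>carrier := H\<rparr> \<times>\<times> M\<lparr>carrier := H\<rparr>
          \<and> M\<lparr>carrier := H\<rparr> \<times>\<times> M\<lparr>carrier := H\<rparr>
              \<cong> product_group {..<2 * s} (\<lambda>_. integer_mod_group 2))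
       \<and> \<B> \<lhd> AutoGroup (L_grp M)
       \<and> AutoGroup (L_grp M) Mod \<B> \<cong> (AutoGroup (L_grp M))\<lparr>carrier := \<A>\<rparr>"
  proof -
  interpret M: comm_group M by (rule assms(1))
  obtain m0 where m0: "m0 \<in> carrier M" "m0 \<otimes>\<^bsub>M\<^esub> m0 \<noteq> \<one>\<^bsub>M\<^esub>"
    using exists_nonsq[OF M.is_group assms(4)] by blast
  note mb = M.main_bc[OF assms(2) m0]
  have HH: "M.Hs = H" unfolding M.Hs_def H_def ..
  obtain h where h: "h \<in> iso M (product_group {..<s} (\<lambda>j. integer_mod_group (2 * i j)) \<times>\<times> M1)"
    using assms(10) unfolding is_iso_def by blast
  have a2: "M\<lparr>carrier := H\<rparr> \<times>\<times> M\<lparr>carrier := H\<rparr> \<cong> product_group {..<2 * s} (\<lambda>_. integer_mod_group 2)"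
    unfolding H_def by (rule a2[OF assms(1) assms(6) assms(7) assms(9) h])
  show ?thesis using mb a2 unfolding HH \<A>_def \<B>_def by blast
qed

end
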